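(* For every $\delta>0$ there exist an unweighted congestion game $\mathcal{G}_1$ with quadratic latency functions and an unweighted congestion game $\mathcal{G}_2$ with cubic latency functions such that $\mathrm{PoS}(\mathcal{G}_1)\ge 2.1859-\delta$ and $\mathrm{PoS}(\mathcal{G}_2)\ge 2.7558-\delta$.
   Context: A weighted congestion game consists of a finite set $[n]=\{1,\dots,n\}$ of players, a finite set $E$ of resources, for each player $i$ a weight $w_i>0$ and a nonempty finite strategy set $\Sigma_i\subseteq 2^E$, and for each resource $e$ a latency function $\ell_e:\mathbb{R}_{\ge 0}\to\mathbb{R}_{\ge 0}$. It is unweighted if $w_i=1$ for all $i$. Quadratic (resp. cubic) latency functions means $\ell_e(x)=\sum_{j=0}^{d}\alpha_{e,j}x^j$ with all $\alpha_{e,j}\ge 0$ and $d=2$ (resp. $d=3$). For a strategy profile $S=(s_1,\dots,s_n)$, the congestion of $e$ is $L_e(S)=\sum_{i:\,e\in s_i}w_i$, the cost of player $i$ is $c_i(S)=\sum_{e\in s_i}\ell_e(L_e(S))$, and $\mathrm{SUM}(S)=\sum_i c_i(S)$; $S^*$ minimizes $\mathrm{SUM}$. A pure Nash equilibrium (PNE) is a profile $S$ with $c_i(S)\le c_i(S_{-i}\diamond t)$ for all $i$ and $t\in\Sigma_i$, where $(S_{-i}\diamond t)$ replaces $s_i$ by $t$. $\mathrm{PoS}(\mathcal{G})=\min_{S\ \mathrm{PNE}}\mathrm{SUM}(S)/\mathrm{SUM}(S^* )$. *)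

theory Defs
  imports Main "HOL.Real"
begin

(* A strategy profile is a function S :: nat => nat set with S i in Sig i for i < n
   (and S i = {} for i >= n, for extensionality). *)

definition congestion_game ::
  "nat \<Rightarrow> (nat \<Rightarrow> real) \<Rightarrow> nat set \<Rightarrow> (nat \<Rightarrow> nat set set) \<Rightarrow> (nat \<Rightarrow> real \<Rightarrow> real) \<Rightarrow> bool" where
  "congestion_game n w E Sig lat \<longleftrightarrow>
     finite E \<and>
     (\<forall>i<n. w i > 0 \<and> Sig i \<noteq> {} \<and> finite (Sig i) \<and> (\<forall>s\<in>Sig i. s \<subseteq> E)) \<and>
     (\<forall>e\<in>E. \<forall>x\<ge>0. lat e x \<ge> 0)"

definition unweighted :: "nat \<Rightarrow> (nat \<Rightarrow> real) \<Rightarrow> bool" where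
  "unweighted n w \<longleftrightarrow> (\<forall>i<n. w i = 1)"

definition poly_latencies :: "nat \<Rightarrow> nat set \<Rightarrow> (nat \<Rightarrow> real \<Rightarrow> real) \<Rightarrow> bool" where
  "poly_latencies d E lat \<longleftrightarrow>
     (\<forall>e\<in>E. \<exists>\<alpha> :: nat \<Rightarrow> real. (\<forall>j. \<alpha> j \<ge> 0) \<and>
        (\<forall>x\<ge>0. lat e x = (\<Sum>j\<le>d. \<alpha> j * x ^ j)))"

definition profiles :: "nat \<Rightarrow> (nat \<Rightarrow> nat set set) \<Rightarrow> (nat \<Rightarrow> nat set) set" where
  "profiles n Sig = {S. (\<forall>i<n. S i \<in> Sig i) \<and> (\<forall>i\<ge>n. S i = {})}"

definition congestion :: "nat \<Rightarrow> (nat \<Rightarrow> real) \<Rightarrow> (nat \<Rightarrow> nat set) \<Rightarrow> nat \<Rightarrow> real" where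
  "congestion n w S e = (\<Sum>i\<in>{i. i < n \<and> e \<in> S i}. w i)"

definition player_cost ::
  "nat \<Rightarrow> (nat \<Rightarrow> real) \<Rightarrow> (nat \<Rightarrow> real \<Rightarrow> real) \<Rightarrow> (nat \<Rightarrow> nat set) \<Rightarrow> nat \<Rightarrow> real" where
  "player_cost n w lat S i = (\<Sum>e\<in>S i. lat e (congestion n w S e))"

definition SUM_cost ::
  "nat \<Rightarrow> (nat \<Rightarrow> real) \<Rightarrow> (nat \<Rightarrow> real \<Rightarrow> real) \<Rightarrow> (nat \<Rightarrow> nat set) \<Rightarrow> real" where
  "SUM_cost n w lat S = (\<Sum>i<n. player_cost n w lat S i)"

definition is_PNE ::
  "nat \<Rightarrow> (nat \<Rightarrow> real) \<Rightarrow> (nat \<Rightarrow> nat set set) \<Rightarrow> (nat \<Rightarrow> real \<Rightarrow> real) \<Rightarrow> (nat \<Rightarrow> nat set) \<Rightarrow> bool" where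
  "is_PNE n w Sig lat S \<longleftrightarrow> S \<in> profiles n Sig \<and>
     (\<forall>i<n. \<forall>t\<in>Sig i. player_cost n w lat S i \<le> player_cost n w lat (S(i := t)) i)"

definition OPT ::
  "nat \<Rightarrow> (nat \<Rightarrow> real) \<Rightarrow> (nat \<Rightarrow> nat set set) \<Rightarrow> (nat \<Rightarrow> real \<Rightarrow> real) \<Rightarrow> real" where
  "OPT n w Sig lat = Min (SUM_cost n w lat ` profiles n Sig)"

definition PoS ::
  "nat \<Rightarrow> (nat \<Rightarrow> real) \<Rightarrow> (nat \<Rightarrow> nat set set) \<Rightarrow> (nat \<Rightarrow> real \<Rightarrow> real) \<Rightarrow> real" where
  "PoS n w Sig lat =
     Min {SUM_cost n w lat S / OPT n w Sig lat | S. is_PNE n w Sig lat S}"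

end

theory Submission imports Defs "HOL-Library.Nat_Bijection" begin

lemma card_split_subsets:
  assumes fin: "finite M" and KM: "K \<subseteq> M" and tr: "t \<le> r"
  shows "card {B. B \<subseteq> M \<and> card B = r \<and> card (B \<inter> K) = t}
         = (card K choose t) * (card (M - K) choose (r - t))"
proof -
  let ?A = "{X. X \<subseteq> K \<and> card X = t}"
  let ?C = "{Y. Y \<subseteq> M - K \<and> card Y = r - t}"
  have finK: "finite K" using fin KM finite_subset by blast
  have finMK: "finite (M - K)" using fin by blast
  have eq: "{B. B \<subseteq> M \<and> card B = r \<and> card (B \<inter> K) = t} = (\<lambda>(X,Y). X \<union> Y) ` (?A \<times> ?C)"
  proof (rule set_eqI, rule iffI)
    fix B assume "B \<in> {B. B \<subseteq> M \<and> card B = r \<and> card (B \<inter> K) = t}"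
    hence B: "B \<subseteq> M" "card B = r" "card (B \<inter> K) = t" by auto
    have finB: "finite B" using B(1) fin finite_subset by blast
    have "card B = card (B \<inter> K) + card (B - K)"
      using finB by (metis Int_Diff_disjoint Int_Diff_Un card_Un_disjoint finite_Diff finite_Int)
    hence "card (B - K) = r - t" using B by simp
    hence "(B \<inter> K, B - K) \<in> ?A \<times> ?C" using B by auto
    moreover have "B = (\<lambda>(X,Y). X \<union> Y) (B \<inter> K, B - K)" by auto
    ultimately show "B \<in> (\<lambda>(X,Y). X \<union> Y) ` (?A \<times> ?C)" by blast
  next
    fix B assume "B \<in> (\<lambda>(X,Y). X \<union> Y) ` (?A \<times> ?C)"
    then obtain X Y where XY: "X \<subseteq> K" "card X = t" "Y \<subseteq> M - K" "card Y = r - t" and BXY: "B = X \<union> Y" by auto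
    have fX: "finite X" using XY finK finite_subset by blast
    have fY: "finite Y" using XY finMK finite_subset by blast
    have dis: "X \<inter> Y = {}" using XY by auto
    have "card B = r" using BXY card_Un_disjoint[OF fX fY dis] XY tr by simp
    moreover have "B \<inter> K = X" using XY BXY by auto
    ultimately show "B \<in> {B. B \<subseteq> M \<and> card B = r \<and> card (B \<inter> K) = t}" using XY BXY KM by auto
  qed
  have inj: "inj_on (\<lambda>(X,Y). X \<union> Y) (?A \<times> ?C)"
  proof (rule inj_onI, clarify)
    fix X Y X' Y' assume "X \<subseteq> K" "Y \<subseteq> M - K" "X' \<subseteq> K" "Y' \<subseteq> M - K" "X \<union> Y = X' \<union> Y'"
    thus "X = X' \<and> Y = Y'" by blast
  qed
  show ?thesis unfolding eq card_image[OF inj] card_cartesian_product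
    using n_subsets[OF finK] n_subsets[OF finMK] by simp
qed

lemma sum_by_intersection:
  fixes g :: "nat \<Rightarrow> real"
  assumes fin: "finite M" and KM: "K \<subseteq> M"
  shows "(\<Sum>B\<in>{B. B \<subseteq> M \<and> card B = r}. g (card (B \<inter> K)))
       = (\<Sum>t\<le>r. real (card K choose t) * real (card (M - K) choose (r - t)) * g t)"
proof -
  let ?F = "{B. B \<subseteq> M \<and> card B = r}"
  have finF: "finite ?F" using fin by simp
  have img: "(\<lambda>B. card (B \<inter> K)) ` ?F \<subseteq> {..r}"
  proof
    fix x assume "x \<in> (\<lambda>B. card (B \<inter> K)) ` ?F"
    then obtain B where "B \<subseteq> M" "card B = r" "x = card (B \<inter> K)" by auto
    moreover have "finite B" using \<open>B \<subseteq> M\<close> fin finite_subset by blast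
    ultimately show "x \<in> {..r}" by (metis Int_lower1 atMost_iff card_mono finite_Int)
  qed
  have "(\<Sum>B\<in>?F. g (card (B \<inter> K))) = (\<Sum>t\<le>r. \<Sum>B\<in>{B \<in> ?F. card (B \<inter> K) = t}. g (card (B \<inter> K)))"
    using sum.group[OF finF _ img, of "\<lambda>B. g (card (B \<inter> K))"] by simp
  also have "\<dots> = (\<Sum>t\<le>r. real (card {B \<in> ?F. card (B \<inter> K) = t}) * g t)"
    by (rule sum.cong) auto
  also have "\<dots> = (\<Sum>t\<le>r. real (card K choose t) * real (card (M - K) choose (r - t)) * g t)"
  proof (rule sum.cong)
    fix t assume "t \<in> {..r}"
    hence "card {B \<in> ?F. card (B \<inter> K) = t} = (card K choose t) * (card (M - K) choose (r - t))"
      using card_split_subsets[OF fin KM, of t r] by (simp add: conj_assoc)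
    thus "real (card {B \<in> ?F. card (B \<inter> K) = t}) * g t = real (card K choose t) * real (card (M - K) choose (r - t)) * g t"
      by simp
  qed simp
  finally show ?thesis .
qed


definition UU :: "nat set" where "UU = {..<12}"
definition pr :: "nat \<Rightarrow> nat \<Rightarrow> nat" where "pr j i = 12 + 12 * j + i"
definition tri :: "nat set \<Rightarrow> nat" where "tri B = 156 + set_encode B"
definition Trip :: "nat set set" where "Trip = {B. B \<subseteq> UU \<and> card B = 3}"
definition Ps :: "nat \<Rightarrow> nat set" where
  "Ps i = (\<lambda>j. pr i j) ` (UU - {i}) \<union> tri ` {B \<in> Trip. i \<notin> B}"
definition Qs :: "nat \<Rightarrow> nat set" where
  "Qs i = insert i ((\<lambda>j. pr j i) ` (UU - {i}) \<union> tri ` {B \<in> Trip. i \<in> B})"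
definition Gs :: "nat \<Rightarrow> nat set set" where "Gs i = {Ps i, Qs i}"
definition EE :: "nat set" where "EE = UU \<union> (\<lambda>(j,i). pr j i) ` (UU \<times> UU) \<union> tri ` Trip"
definition glat :: "nat \<Rightarrow> real \<Rightarrow> real \<Rightarrow> real \<Rightarrow> nat \<Rightarrow> real \<Rightarrow> real" where
  "glat d c a b e x = (if e < 12 then c else if e < 156 then a * x ^ d else b * x ^ d)"
definition prof :: "nat set \<Rightarrow> nat \<Rightarrow> nat set" where
  "prof X i = (if i < 12 then (if i \<in> X then Qs i else Ps i) else {})"

lemma UU_iff: "l \<in> UU \<longleftrightarrow> l < 12" by (simp add: UU_def)
lemma finite_UU[simp]: "finite UU" by (simp add: UU_def)
lemma card_UU[simp]: "card UU = 12" by (simp add: UU_def)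
lemma finite_Trip: "finite Trip" unfolding Trip_def by (simp add: UU_def)
lemma Trip_finite: "B \<in> Trip \<Longrightarrow> finite B" unfolding Trip_def by (auto intro: finite_subset[OF _ finite_UU])

lemma pr_bounds: "j < 12 \<Longrightarrow> i < 12 \<Longrightarrow> 12 \<le> pr j i \<and> pr j i < 156"
  unfolding pr_def by simp
lemma tri_ge: "156 \<le> tri B" unfolding tri_def by simp
lemma pr_inj: assumes "j < 12" "i < 12" "j' < 12" "i' < 12"
  shows "pr j i = pr j' i' \<longleftrightarrow> j = j' \<and> i = i'"
proof
  assume "pr j i = pr j' i'"
  hence h: "12 * j + i = 12 * j' + i'" unfolding pr_def by simp
  have "j = (12 * j + i) div 12" using assms by simp
  also have "\<dots> = (12 * j' + i') div 12" using h by simp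
  also have "\<dots> = j'" using assms by simp
  finally have "j = j'" .
  thus "j = j' \<and> i = i'" using h by simp
qed simp
lemma pr_ne_tri: "j < 12 \<Longrightarrow> i < 12 \<Longrightarrow> pr j i \<noteq> tri B"
  using pr_bounds tri_ge by (metis not_le)
lemma tri_inj: "finite B \<Longrightarrow> finite B' \<Longrightarrow> tri B = tri B' \<longleftrightarrow> B = B'"
  unfolding tri_def by (simp add: set_encode_eq)

lemma pr_in_Ps: assumes "j \<in> UU" "i \<in> UU" "l \<in> UU"
  shows "pr j i \<in> Ps l \<longleftrightarrow> l = j \<and> i \<noteq> j"
proof -
  have nt: "pr j i \<notin> tri ` A" for A using pr_ne_tri assms by (auto simp: UU_iff)
  have "pr j i \<in> (\<lambda>m. pr l m) ` (UU - {l}) \<longleftrightarrow> l = j \<and> i \<noteq> j"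
  proof
    assume "pr j i \<in> (\<lambda>m. pr l m) ` (UU - {l})"
    then obtain m where m: "m \<in> UU - {l}" "pr j i = pr l m" by blast
    hence "j = l \<and> i = m" using pr_inj assms by (simp add: UU_iff)
    thus "l = j \<and> i \<noteq> j" using m by blast
  next
    assume "l = j \<and> i \<noteq> j"
    thus "pr j i \<in> (\<lambda>m. pr l m) ` (UU - {l})" using assms by blast
  qed
  thus ?thesis unfolding Ps_def using nt by blast
qed

lemma pr_in_Qs: assumes "j \<in> UU" "i \<in> UU" "l \<in> UU"
  shows "pr j i \<in> Qs l \<longleftrightarrow> l = i \<and> i \<noteq> j"
proof -
  have nt: "pr j i \<notin> tri ` A" for A using pr_ne_tri assms by (auto simp: UU_iff)
  have nl: "pr j i \<noteq> l" using pr_bounds[of j i] assms by (auto simp: UU_iff)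
  have "pr j i \<in> (\<lambda>m. pr m l) ` (UU - {l}) \<longleftrightarrow> l = i \<and> i \<noteq> j"
  proof
    assume "pr j i \<in> (\<lambda>m. pr m l) ` (UU - {l})"
    then obtain m where m: "m \<in> UU - {l}" "pr j i = pr m l" by blast
    hence "j = m \<and> i = l" using pr_inj assms by (simp add: UU_iff)
    thus "l = i \<and> i \<noteq> j" using m by blast
  next
    assume "l = i \<and> i \<noteq> j"
    thus "pr j i \<in> (\<lambda>m. pr m l) ` (UU - {l})" using assms by blast
  qed
  thus ?thesis unfolding Qs_def using nt nl by blast
qed

lemma tri_notin_pr: assumes "l \<in> UU"
  shows "tri B \<notin> (\<lambda>m. pr l m) ` (UU - {l})" "tri B \<notin> (\<lambda>m. pr m l) ` (UU - {l})"
proof -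
  have h: "\<forall>m\<in>UU. pr l m \<noteq> tri B \<and> pr m l \<noteq> tri B" using pr_ne_tri assms by (simp add: UU_iff)
  show "tri B \<notin> (\<lambda>m. pr l m) ` (UU - {l})" using h by (auto simp: image_iff)
  show "tri B \<notin> (\<lambda>m. pr m l) ` (UU - {l})" using h by (auto simp: image_iff)
qed

lemma tri_in_img: assumes "B \<in> Trip" shows "tri B \<in> tri ` {B' \<in> Trip. P B'} \<longleftrightarrow> P B"
proof
  assume "tri B \<in> tri ` {B' \<in> Trip. P B'}"
  then obtain B' where "B' \<in> Trip" "P B'" "tri B = tri B'" by blast
  thus "P B" using tri_inj Trip_finite assms by metis
next
  assume "P B" thus "tri B \<in> tri ` {B' \<in> Trip. P B'}" using assms by blast
qed

lemma tri_in_Ps: assumes "B \<in> Trip" "l \<in> UU"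
  shows "tri B \<in> Ps l \<longleftrightarrow> l \<notin> B"
  unfolding Ps_def using tri_notin_pr[OF assms(2)] tri_in_img[OF assms(1), of "\<lambda>B. l \<notin> B"] by blast

lemma tri_in_Qs: assumes "B \<in> Trip" "l \<in> UU"
  shows "tri B \<in> Qs l \<longleftrightarrow> l \<in> B"
proof -
  have "tri B \<noteq> l" using tri_ge[of B] assms(2) by (simp add: UU_iff)
  thus ?thesis unfolding Qs_def using tri_notin_pr[OF assms(2)] tri_in_img[OF assms(1), of "\<lambda>B. l \<in> B"] by blast
qed

lemma cong_card: "congestion 12 (\<lambda>_. 1) S e = real (card {l. l < 12 \<and> e \<in> S l})"
  unfolding congestion_def by simp

lemma users_pr: assumes "j \<in> UU" "i \<in> UU" "i \<noteq> j" "X \<subseteq> UU"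
  shows "{l. l < 12 \<and> pr j i \<in> prof X l} = (if i \<in> X then {i} else {}) \<union> (if j \<notin> X then {j} else {})"
proof (rule set_eqI)
  fix l
  show "l \<in> {l. l < 12 \<and> pr j i \<in> prof X l} \<longleftrightarrow> l \<in> (if i \<in> X then {i} else {}) \<union> (if j \<notin> X then {j} else {})"
  proof (cases "l < 12")
    case True
    hence lU: "l \<in> UU" by (simp add: UU_iff)
    show ?thesis using True pr_in_Ps[OF assms(1,2) lU] pr_in_Qs[OF assms(1,2) lU] assms(3)
      unfolding prof_def by auto
  next
    case False
    thus ?thesis using assms(1,2) by (auto simp: UU_iff)
  qed
qed

lemma cong_pr: assumes "j \<in> UU" "i \<in> UU" "i \<noteq> j" "X \<subseteq> UU"
  shows "congestion 12 (\<lambda>_. 1) (prof X) (pr j i) = (if i \<in> X then 1 else 0) + (if j \<notin> X then 1 else 0)"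
  unfolding cong_card users_pr[OF assms] using assms(3) by auto

lemma users_tri: assumes "B \<in> Trip" "X \<subseteq> UU"
  shows "{l. l < 12 \<and> tri B \<in> prof X l} = (B \<inter> X) \<union> (UU - B - X)"
proof (rule set_eqI)
  fix l
  have BU: "B \<subseteq> UU" using assms Trip_def by auto
  show "l \<in> {l. l < 12 \<and> tri B \<in> prof X l} \<longleftrightarrow> l \<in> (B \<inter> X) \<union> (UU - B - X)"
  proof (cases "l < 12")
    case True
    hence lU: "l \<in> UU" by (simp add: UU_iff)
    show ?thesis using True lU tri_in_Ps[OF assms(1) lU] tri_in_Qs[OF assms(1) lU]
      unfolding prof_def by auto
  next
    case False
    thus ?thesis using BU assms(2) by (auto simp: UU_iff)
  qed
qed

lemma cong_tri: assumes "B \<in> Trip" "X \<subseteq> UU"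
  shows "congestion 12 (\<lambda>_. 1) (prof X) (tri B) = real (card (B \<inter> X)) + real (card (UU - B - X))"
proof -
  have fB: "finite B" using Trip_finite assms by blast
  have "card ((B \<inter> X) \<union> (UU - B - X)) = card (B \<inter> X) + card (UU - B - X)"
    by (rule card_Un_disjoint) (use fB in auto)
  thus ?thesis unfolding cong_card users_tri[OF assms] by simp
qed


definition Pf :: "nat \<Rightarrow> real \<Rightarrow> real \<Rightarrow> nat \<Rightarrow> real" where
 "Pf d a b k = a * (real k * 2 ^ d + (11 - real k)) +
    (\<Sum>t\<le>3. real (k choose t) * real ((11 - k) choose (3 - t)) * (b * (9 - real k + 2 * real t) ^ d))"
definition Qf :: "nat \<Rightarrow> real \<Rightarrow> real \<Rightarrow> real \<Rightarrow> nat \<Rightarrow> real" where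
 "Qf d c a b k = c + a * (real (11 - k) * 2 ^ d + real k) +
    (\<Sum>t\<le>2. real (k choose t) * real ((11 - k) choose (2 - t)) * (b * (10 - real k + 2 * real t) ^ d))"

abbreviation w1 :: "nat \<Rightarrow> real" where "w1 \<equiv> (\<lambda>_. 1)"

lemma sum_if_card:
  assumes "finite M"
  shows "(\<Sum>j\<in>M. if j \<in> X then p else q) = real (card (M \<inter> X)) * p + real (card (M - X)) * (q::real)"
proof -
  have "(\<Sum>j\<in>M. if j \<in> X then p else q) = (\<Sum>j\<in>M \<inter> {x. x \<in> X}. p) + (\<Sum>j\<in>M \<inter> - {x. x \<in> X}. q)"
    by (rule sum.If_cases[OF assms])
  also have "M \<inter> {x. x \<in> X} = M \<inter> X" by auto
  also have "M \<inter> - {x. x \<in> X} = M - X" by auto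
  finally show ?thesis by simp
qed

lemma load_eq:
  assumes "finite U" "B \<subseteq> U" "X \<subseteq> U"
  shows "real (card (U - B - X)) = real (card U) - real (card B) - real (card X) + real (card (B \<inter> X))"
proof -
  have fB: "finite B" and fX: "finite X" using assms finite_subset by blast+
  have "U - B - X = U - (B \<union> X)" by auto
  hence "card (U - B - X) = card U - card (B \<union> X)" using assms by (simp add: card_Diff_subset fB fX)
  moreover have "card (B \<union> X) \<le> card U" using assms by (simp add: card_mono)
  moreover have "card (B \<union> X) + card (B \<inter> X) = card B + card X" using card_Un_Int[OF fB fX] by simp
  ultimately show ?thesis by linarith
qed

lemma glat_pr: "j \<in> UU \<Longrightarrow> i \<in> UU \<Longrightarrow> glat d c a b (pr j i) x = a * x ^ d"
  using pr_bounds[of j i] unfolding glat_def by (simp add: UU_iff)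
lemma glat_tri: "glat d c a b (tri B) x = b * x ^ d"
  using tri_ge[of B] unfolding glat_def by simp
lemma glat_prv: "i \<in> UU \<Longrightarrow> glat d c a b i x = c"
  unfolding glat_def by (simp add: UU_iff)

lemma cost_P:
  assumes iU: "i \<in> UU" and XU: "X \<subseteq> UU" and iX: "i \<notin> X"
  shows "player_cost 12 w1 (glat d c a b) (prof X) i = Pf d a b (card X)"
proof -
  let ?k = "card X"
  let ?M = "UU - {i}"
  let ?cg = "congestion 12 w1 (prof X)"
  have XM: "X \<subseteq> ?M" using XU iX by auto
  have fM: "finite ?M" by simp
  have cM: "card ?M = 11" using iU by simp
  have pi: "prof X i = Ps i" using iU iX unfolding prof_def by (simp add: UU_iff)
  let ?A1 = "(\<lambda>j. pr i j) ` ?M"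
  let ?T = "{B \<in> Trip. i \<notin> B}"
  let ?A2 = "tri ` ?T"
  have fA1: "finite ?A1" by simp
  have fT: "finite ?T" using finite_Trip by simp
  have dis: "?A1 \<inter> ?A2 = {}"
  proof (rule equals0I)
    fix e assume e: "e \<in> ?A1 \<inter> ?A2"
    then obtain B where "e = tri B" by blast
    with e show False using tri_notin_pr(1)[OF iU, of B] by simp
  qed
  have injA1: "inj_on (\<lambda>j. pr i j) ?M" using pr_inj iU by (auto simp: inj_on_def UU_iff)
  have injA2: "inj_on tri ?T" using tri_inj Trip_finite by (auto simp: inj_on_def)
  have s1: "(\<Sum>e\<in>?A1. glat d c a b e (?cg e)) = a * (real ?k * 2 ^ d + (11 - real ?k))"
  proof -
    have "(\<Sum>e\<in>?A1. glat d c a b e (?cg e)) = (\<Sum>j\<in>?M. glat d c a b (pr i j) (?cg (pr i j)))"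
      by (rule sum.reindex[OF injA1, unfolded comp_def])
    also have "\<dots> = (\<Sum>j\<in>?M. if j \<in> X then a * 2 ^ d else a)"
    proof (rule sum.cong)
      fix j assume j: "j \<in> ?M"
      hence "?cg (pr i j) = (if j \<in> X then 1 else 0) + (if i \<notin> X then 1 else 0)"
        using cong_pr[OF iU _ _ XU, of j] by auto
      thus "glat d c a b (pr i j) (?cg (pr i j)) = (if j \<in> X then a * 2 ^ d else a)"
        using glat_pr[OF iU, of j] j iX by auto
    qed simp
    also have "\<dots> = real (card (?M \<inter> X)) * (a * 2 ^ d) + real (card (?M - X)) * a"
      by (rule sum_if_card[OF fM])
    also have "?M \<inter> X = X" using XM by auto
    also have "card (?M - X) = 11 - ?k" using XM cM by (simp add: card_Diff_subset finite_subset[OF XM fM])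
    also have "real (11 - ?k) = 11 - real ?k" using card_mono[OF fM XM] cM by simp
    finally show ?thesis by (simp add: algebra_simps)
  qed
  have s2: "(\<Sum>e\<in>?A2. glat d c a b e (?cg e)) =
      (\<Sum>t\<le>3. real (?k choose t) * real ((11 - ?k) choose (3 - t)) * (b * (9 - real ?k + 2 * real t) ^ d))"
  proof -
    have "(\<Sum>e\<in>?A2. glat d c a b e (?cg e)) = (\<Sum>B\<in>?T. glat d c a b (tri B) (?cg (tri B)))"
      by (rule sum.reindex[OF injA2, unfolded comp_def])
    also have "\<dots> = (\<Sum>B\<in>{B. B \<subseteq> ?M \<and> card B = 3}. (\<lambda>t. b * (9 - real ?k + 2 * real t) ^ d) (card (B \<inter> X)))"
    proof (rule sum.cong)
      show "?T = {B. B \<subseteq> ?M \<and> card B = 3}" unfolding Trip_def by auto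
    next
      fix B assume B: "B \<in> {B. B \<subseteq> ?M \<and> card B = 3}"
      hence BT: "B \<in> Trip" and BU: "B \<subseteq> UU" unfolding Trip_def by auto
      have "?cg (tri B) = real (card (B \<inter> X)) + real (card (UU - B - X))" by (rule cong_tri[OF BT XU])
      also have "\<dots> = 9 - real ?k + 2 * real (card (B \<inter> X))"
        using load_eq[OF finite_UU BU XU] B by simp
      finally show "glat d c a b (tri B) (?cg (tri B)) = (\<lambda>t. b * (9 - real ?k + 2 * real t) ^ d) (card (B \<inter> X))"
        by (simp add: glat_tri)
    qed
    also have "\<dots> = (\<Sum>t\<le>3. real (?k choose t) * real (card (?M - X) choose (3 - t)) * (b * (9 - real ?k + 2 * real t) ^ d))"
      by (rule sum_by_intersection[OF fM XM])
    also have "card (?M - X) = 11 - ?k" using XM cM by (simp add: card_Diff_subset finite_subset[OF XM fM])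
    finally show ?thesis .
  qed
  have "player_cost 12 w1 (glat d c a b) (prof X) i = (\<Sum>e\<in>?A1 \<union> ?A2. glat d c a b e (?cg e))"
    unfolding player_cost_def pi Ps_def by simp
  also have "\<dots> = (\<Sum>e\<in>?A1. glat d c a b e (?cg e)) + (\<Sum>e\<in>?A2. glat d c a b e (?cg e))"
    by (rule sum.union_disjoint[OF fA1 _ dis]) (use fT in simp)
  finally show ?thesis unfolding s1 s2 Pf_def .
qed


lemma cost_Q:
  assumes iU: "i \<in> UU" and XU: "X \<subseteq> UU" and iX: "i \<in> X"
  shows "player_cost 12 w1 (glat d c a b) (prof X) i = Qf d c a b (card X - 1)"
proof -
  let ?X' = "X - {i}"
  let ?k = "card ?X'"
  let ?M = "UU - {i}"
  let ?cg = "congestion 12 w1 (prof X)"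
  have fX: "finite X" using finite_subset[OF XU finite_UU] .
  have kk: "?k = card X - 1" using iX fX by simp
  have kX: "real (card X) = real ?k + 1" using card_Suc_Diff1[OF fX iX] by linarith
  have XM: "?X' \<subseteq> ?M" using XU by auto
  have fM: "finite ?M" by simp
  have cM: "card ?M = 11" using iU by simp
  have pi: "prof X i = Qs i" using iU iX unfolding prof_def by (simp add: UU_iff)
  let ?A1 = "(\<lambda>j. pr j i) ` ?M"
  let ?T = "{B \<in> Trip. i \<in> B}"
  let ?A2 = "tri ` ?T"
  have fA1: "finite ?A1" by simp
  have fT: "finite ?T" using finite_Trip by simp
  have dis: "?A1 \<inter> ?A2 = {}"
  proof (rule equals0I)
    fix e assume e: "e \<in> ?A1 \<inter> ?A2"
    then obtain B where "e = tri B" by blast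
    with e show False using tri_notin_pr(2)[OF iU, of B] by simp
  qed
  have iA: "i \<notin> ?A1 \<union> ?A2"
  proof
    assume "i \<in> ?A1 \<union> ?A2"
    moreover have "i \<notin> ?A2"
    proof
      assume "i \<in> ?A2" then obtain B where "i = tri B" by blast
      thus False using tri_ge[of B] iU by (simp add: UU_iff)
    qed
    moreover have "i \<notin> ?A1"
    proof
      assume "i \<in> ?A1" then obtain j where "j \<in> ?M" "i = pr j i" by blast
      thus False using pr_bounds[of j i] iU by (simp add: UU_iff)
    qed
    ultimately show False by blast
  qed
  have injA1: "inj_on (\<lambda>j. pr j i) ?M" using pr_inj iU by (auto simp: inj_on_def UU_iff)
  have injA2: "inj_on tri ?T" using tri_inj Trip_finite by (auto simp: inj_on_def)
  have s1: "(\<Sum>e\<in>?A1. glat d c a b e (?cg e)) = a * (real (11 - ?k) * 2 ^ d + real ?k)"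
  proof -
    have "(\<Sum>e\<in>?A1. glat d c a b e (?cg e)) = (\<Sum>j\<in>?M. glat d c a b (pr j i) (?cg (pr j i)))"
      by (rule sum.reindex[OF injA1, unfolded comp_def])
    also have "\<dots> = (\<Sum>j\<in>?M. if j \<in> ?X' then a else a * 2 ^ d)"
    proof (rule sum.cong)
      fix j assume j: "j \<in> ?M"
      hence "?cg (pr j i) = (if i \<in> X then 1 else 0) + (if j \<notin> X then 1 else 0)"
        using cong_pr[OF _ iU _ XU, of j] by auto
      thus "glat d c a b (pr j i) (?cg (pr j i)) = (if j \<in> ?X' then a else a * 2 ^ d)"
        using glat_pr[OF _ iU, of j] j iX by auto
    qed simp
    also have "\<dots> = real (card (?M \<inter> ?X')) * a + real (card (?M - ?X')) * (a * 2 ^ d)"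
      by (rule sum_if_card[OF fM])
    also have "?M \<inter> ?X' = ?X'" using XM by auto
    also have "card (?M - ?X') = 11 - ?k"
    proof -
      have "card (?M - ?X') = card ?M - card ?X'" by (rule card_Diff_subset[OF finite_subset[OF XM fM] XM])
      thus ?thesis by (simp only: cM)
    qed
    finally show ?thesis by (simp add: algebra_simps)
  qed
  let ?F2 = "{B. B \<subseteq> ?M \<and> card B = 2}"
  have Teq: "?T = insert i ` ?F2"
  proof (rule set_eqI, rule iffI)
    fix B assume "B \<in> ?T"
    hence B: "B \<subseteq> UU" "card B = 3" "i \<in> B" unfolding Trip_def by auto
    have "finite B" using finite_subset[OF B(1) finite_UU] .
    hence "B - {i} \<in> ?F2" using B by auto
    moreover have "B = insert i (B - {i})" using B by auto
    ultimately show "B \<in> insert i ` ?F2" by blast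
  next
    fix B assume "B \<in> insert i ` ?F2"
    then obtain B' where B': "B' \<subseteq> ?M" "card B' = 2" "B = insert i B'" by blast
    have "finite B'" using finite_subset[OF B'(1) fM] .
    moreover have "i \<notin> B'" using B'(1) by auto
    ultimately have "card B = 3" using B' by simp
    thus "B \<in> ?T" using B' iU unfolding Trip_def by auto
  qed
  have injI: "inj_on (insert i) ?F2"
  proof (rule inj_onI)
    fix B1 B2 assume "B1 \<in> ?F2" "B2 \<in> ?F2" and eq: "insert i B1 = insert i B2"
    hence "i \<notin> B1" "i \<notin> B2" by auto
    hence "B1 = insert i B1 - {i}" "B2 = insert i B2 - {i}" by auto
    thus "B1 = B2" using eq by simp
  qed
  have s2: "(\<Sum>e\<in>?A2. glat d c a b e (?cg e)) =
      (\<Sum>t\<le>2. real (?k choose t) * real ((11 - ?k) choose (2 - t)) * (b * (10 - real ?k + 2 * real t) ^ d))"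
  proof -
    have "(\<Sum>e\<in>?A2. glat d c a b e (?cg e)) = (\<Sum>B\<in>?T. glat d c a b (tri B) (?cg (tri B)))"
      by (rule sum.reindex[OF injA2, unfolded comp_def])
    also have "\<dots> = (\<Sum>B'\<in>?F2. glat d c a b (tri (insert i B')) (?cg (tri (insert i B'))))"
      unfolding Teq by (rule sum.reindex[OF injI, unfolded comp_def])
    also have "\<dots> = (\<Sum>B\<in>?F2. (\<lambda>t. b * (10 - real ?k + 2 * real t) ^ d) (card (B \<inter> ?X')))"
    proof (rule sum.cong)
      fix B assume B: "B \<in> ?F2"
      have BT: "insert i B \<in> Trip" using \<open>B \<in> ?F2\<close> Teq by blast
      hence BU: "insert i B \<subseteq> UU" and c3: "card (insert i B) = 3" unfolding Trip_def by auto
      have BM: "B \<subseteq> ?M" using B by simp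
      have fB: "finite B" using finite_subset[OF BM fM] .
      have iB: "i \<notin> B" using B by auto
      have int: "insert i B \<inter> X = insert i (B \<inter> ?X')" using iX by auto
      have cint: "card (insert i B \<inter> X) = card (B \<inter> ?X') + 1"
        unfolding int using fB iB by simp
      have "?cg (tri (insert i B)) = real (card (insert i B \<inter> X)) + real (card (UU - insert i B - X))"
        by (rule cong_tri[OF BT XU])
      also have "\<dots> = 10 - real ?k + 2 * real (card (B \<inter> ?X'))"
        using load_eq[OF finite_UU BU XU] c3 cint kX by simp
      finally show "glat d c a b (tri (insert i B)) (?cg (tri (insert i B))) = (\<lambda>t. b * (10 - real ?k + 2 * real t) ^ d) (card (B \<inter> ?X'))"
        by (simp add: glat_tri)
    qed simp
    also have "\<dots> = (\<Sum>t\<le>2. real (?k choose t) * real (card (?M - ?X') choose (2 - t)) * (b * (10 - real ?k + 2 * real t) ^ d))"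
      by (rule sum_by_intersection[OF fM XM])
    also have "card (?M - ?X') = 11 - ?k"
    proof -
      have "card (?M - ?X') = card ?M - card ?X'" by (rule card_Diff_subset[OF finite_subset[OF XM fM] XM])
      thus ?thesis by (simp only: cM)
    qed
    finally show ?thesis .
  qed
  have "player_cost 12 w1 (glat d c a b) (prof X) i = (\<Sum>e\<in>insert i (?A1 \<union> ?A2). glat d c a b e (?cg e))"
    unfolding player_cost_def pi Qs_def by simp
  also have "\<dots> = glat d c a b i (?cg i) + (\<Sum>e\<in>?A1 \<union> ?A2. glat d c a b e (?cg e))"
    by (rule sum.insert) (use fT iA in simp_all)
  also have "(\<Sum>e\<in>?A1 \<union> ?A2. glat d c a b e (?cg e)) = (\<Sum>e\<in>?A1. glat d c a b e (?cg e)) + (\<Sum>e\<in>?A2. glat d c a b e (?cg e))"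
    by (rule sum.union_disjoint[OF fA1 _ dis]) (use fT in simp)
  finally show ?thesis unfolding s1 s2 Qf_def kk[symmetric] glat_prv[OF iU] by (simp add: add.assoc)
qed


lemma i_Qs_Ps: assumes "i \<in> UU" shows "i \<in> Qs i" "i \<notin> Ps i"
proof -
  show "i \<in> Qs i" unfolding Qs_def by simp
  show "i \<notin> Ps i"
  proof
    assume "i \<in> Ps i"
    then consider (p) j where "i = pr i j" "j \<in> UU - {i}" | (t) B where "i = tri B"
      unfolding Ps_def by blast
    thus False
    proof cases
      case p thus False using pr_bounds[of i j] assms by (simp add: UU_iff)
    next
      case t thus False using tri_ge[of B] assms by (simp add: UU_iff)
    qed
  qed
qed

lemma profiles_eq: "profiles 12 Gs = prof ` Pow UU"
proof (rule set_eqI, rule iffI)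
  fix S assume S: "S \<in> profiles 12 Gs"
  let ?X = "{i \<in> UU. S i = Qs i}"
  have "S = prof ?X"
  proof
    fix i show "S i = prof ?X i"
    proof (cases "i < 12")
      case True
      hence iU: "i \<in> UU" by (simp add: UU_iff)
      have "S i \<in> Gs i" using S True unfolding profiles_def by auto
      hence "S i = Ps i \<or> S i = Qs i" unfolding Gs_def by auto
      thus ?thesis using True iU i_Qs_Ps[OF iU] unfolding prof_def by auto
    next
      case False thus ?thesis using S unfolding profiles_def prof_def by auto
    qed
  qed
  thus "S \<in> prof ` Pow UU" by blast
next
  fix S assume "S \<in> prof ` Pow UU"
  then obtain X where "S = prof X" by blast
  thus "S \<in> profiles 12 Gs" unfolding profiles_def prof_def Gs_def by auto
qed

lemma prof_upd:
  assumes "i \<in> UU"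
  shows "(prof X)(i := Qs i) = prof (insert i X)" "(prof X)(i := Ps i) = prof (X - {i})"
  using assms unfolding prof_def by (auto simp: UU_iff fun_eq_iff)

lemma card_le_11: assumes "X \<subseteq> UU" "i \<in> UU" "i \<notin> X" shows "card X \<le> 11"
proof -
  have "X \<subseteq> UU - {i}" using assms by auto
  hence "card X \<le> card (UU - {i})" by (simp add: card_mono)
  thus ?thesis using assms by simp
qed

locale good_params =
  fixes d :: nat and c a b :: real
  assumes c0: "0 \<le> c" and a0: "0 \<le> a" and b0: "0 \<le> b"
  and dom: "\<And>k. k \<le> 11 \<Longrightarrow> 0 < Pf d a b k \<and> Pf d a b k < Qf d c a b k"
begin

abbreviation "L \<equiv> glat d c a b"

lemma cost_pos: assumes "X \<subseteq> UU" "i \<in> UU" shows "0 < player_cost 12 w1 L (prof X) i"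
proof (cases "i \<in> X")
  case True
  have "card X \<le> 12" using assms card_mono[OF finite_UU assms(1)] by simp
  hence "card X - 1 \<le> 11" by simp
  thus ?thesis using cost_Q[OF assms(2,1) True] dom[of "card X - 1"] by simp
next
  case False
  thus ?thesis using cost_P[OF assms(2,1) False] dom[OF card_le_11[OF assms(1,2) False]] by simp
qed

lemma PNE_unique: assumes "is_PNE 12 w1 Gs L S" shows "S = prof {}"
proof -
  have "S \<in> profiles 12 Gs" using assms is_PNE_def by blast
  then obtain X where XU: "X \<subseteq> UU" and SX: "S = prof X" unfolding profiles_eq by blast
  have "X = {}"
  proof (rule ccontr)
    assume "X \<noteq> {}"
    then obtain i where iX: "i \<in> X" by blast
    hence iU: "i \<in> UU" using XU by blast
    have "Ps i \<in> Gs i" unfolding Gs_def by simp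
    moreover have "i < 12" using iU by (simp add: UU_iff)
    ultimately have le: "player_cost 12 w1 L S i \<le> player_cost 12 w1 L (S(i := Ps i)) i"
      using assms unfolding is_PNE_def by blast
    have fX: "finite X" using finite_subset[OF XU finite_UU] .
    have "card X \<le> 12" using card_mono[OF finite_UU XU] by simp
    hence k: "card X - 1 \<le> 11" by simp
    have "player_cost 12 w1 L S i = Qf d c a b (card X - 1)" unfolding SX by (rule cost_Q[OF iU XU iX])
    moreover have "player_cost 12 w1 L (S(i := Ps i)) i = Pf d a b (card X - 1)"
    proof -
      have "player_cost 12 w1 L (prof (X - {i})) i = Pf d a b (card (X - {i}))"
        by (rule cost_P[OF iU]) (use XU in auto)
      thus ?thesis unfolding SX prof_upd[OF iU] using fX iX by simp
    qed
    ultimately show False using le dom[OF k] by simp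
  qed
  thus ?thesis using SX by simp
qed

lemma PNE_exists: "is_PNE 12 w1 Gs L (prof {})"
  unfolding is_PNE_def
proof (intro conjI allI impI ballI)
  show "prof {} \<in> profiles 12 Gs" unfolding profiles_eq by blast
next
  fix i t assume i: "i < 12" and t: "t \<in> Gs i"
  hence iU: "i \<in> UU" by (simp add: UU_iff)
  from t have "t = Ps i \<or> t = Qs i" unfolding Gs_def by auto
  thus "player_cost 12 w1 L (prof {}) i \<le> player_cost 12 w1 L ((prof {})(i := t)) i"
  proof
    assume "t = Ps i"
    moreover have "(prof {})(i := Ps i) = prof {}" using prof_upd(2)[OF iU, of "{}"] by simp
    ultimately show ?thesis by simp
  next
    assume "t = Qs i"
    moreover have "(prof {})(i := Qs i) = prof {i}" using prof_upd(1)[OF iU, of "{}"] by simp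
    moreover have "player_cost 12 w1 L (prof {}) i = Pf d a b 0" using cost_P[OF iU, of "{}"] by simp
    moreover have "player_cost 12 w1 L (prof {i}) i = Qf d c a b 0" using cost_Q[OF iU, of "{i}"] iU by simp
    ultimately show ?thesis using dom[of 0] by simp
  qed
qed

lemma SUM_P: "SUM_cost 12 w1 L (prof {}) = 12 * Pf d a b 0"
proof -
  have "SUM_cost 12 w1 L (prof {}) = (\<Sum>i\<in>UU. Pf d a b 0)"
    unfolding SUM_cost_def UU_def[symmetric] by (rule sum.cong) (use cost_P in auto)
  thus ?thesis by simp
qed

lemma SUM_Q: "SUM_cost 12 w1 L (prof UU) = 12 * Qf d c a b 11"
proof -
  have "SUM_cost 12 w1 L (prof UU) = (\<Sum>i\<in>UU. Qf d c a b 11)"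
    unfolding SUM_cost_def UU_def[symmetric] by (rule sum.cong) (use cost_Q in auto)
  thus ?thesis by simp
qed

lemma SUM_pos: assumes "X \<subseteq> UU" shows "0 < SUM_cost 12 w1 L (prof X)"
proof -
  have "0 < (\<Sum>i\<in>UU. player_cost 12 w1 L (prof X) i)"
  proof (rule sum_pos)
    have "(0::nat) \<in> UU" by (simp add: UU_iff)
    thus "UU \<noteq> {}" by blast
    fix i assume "i \<in> UU" thus "0 < player_cost 12 w1 L (prof X) i" by (rule cost_pos[OF assms])
  qed simp
  thus ?thesis unfolding SUM_cost_def UU_def .
qed

lemma OPT_bounds: "0 < OPT 12 w1 Gs L" "OPT 12 w1 Gs L \<le> 12 * Qf d c a b 11"
proof -
  have fin: "finite (SUM_cost 12 w1 L ` profiles 12 Gs)" unfolding profiles_eq by simp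
  have ne: "SUM_cost 12 w1 L ` profiles 12 Gs \<noteq> {}" unfolding profiles_eq by blast
  have "OPT 12 w1 Gs L \<in> SUM_cost 12 w1 L ` profiles 12 Gs"
    unfolding OPT_def by (rule Min_in[OF fin ne])
  then obtain X where "X \<subseteq> UU" "OPT 12 w1 Gs L = SUM_cost 12 w1 L (prof X)"
    unfolding profiles_eq by auto
  thus "0 < OPT 12 w1 Gs L" using SUM_pos by simp
  have "SUM_cost 12 w1 L (prof UU) \<in> SUM_cost 12 w1 L ` profiles 12 Gs" unfolding profiles_eq by blast
  hence "OPT 12 w1 Gs L \<le> SUM_cost 12 w1 L (prof UU)" unfolding OPT_def by (rule Min_le[OF fin])
  thus "OPT 12 w1 Gs L \<le> 12 * Qf d c a b 11" using SUM_Q by simp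
qed

lemma PoS_bound: "Pf d a b 0 / Qf d c a b 11 \<le> PoS 12 w1 Gs L"
proof -
  have "{SUM_cost 12 w1 L S / OPT 12 w1 Gs L | S. is_PNE 12 w1 Gs L S}
        = {SUM_cost 12 w1 L (prof {}) / OPT 12 w1 Gs L}"
    using PNE_unique PNE_exists by blast
  hence P: "PoS 12 w1 Gs L = 12 * Pf d a b 0 / OPT 12 w1 Gs L" unfolding PoS_def SUM_P by simp
  have p0: "0 < Pf d a b 0" using dom[of 0] by simp
  have "12 * Pf d a b 0 / (12 * Qf d c a b 11) \<le> 12 * Pf d a b 0 / OPT 12 w1 Gs L"
    by (rule divide_left_mono) (use OPT_bounds p0 in auto)
  thus ?thesis unfolding P by simp
qed

lemma game_ok: "congestion_game 12 w1 EE Gs L"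
  unfolding congestion_game_def
proof (intro conjI allI impI ballI)
  show "finite EE" unfolding EE_def using finite_Trip by simp
next
  fix i :: nat assume i: "i < 12"
  show "0 < w1 i" by simp
  show "Gs i \<noteq> {}" "finite (Gs i)" unfolding Gs_def by auto
  fix s assume "s \<in> Gs i"
  hence "s = Ps i \<or> s = Qs i" unfolding Gs_def by auto
  moreover have "Ps i \<subseteq> EE"
    unfolding Ps_def EE_def using i by (force simp: UU_iff)
  moreover have "Qs i \<subseteq> EE"
    unfolding Qs_def EE_def using i by (force simp: UU_iff)
  ultimately show "s \<subseteq> EE" by blast
next
  fix e x assume "e \<in> EE" "(0::real) \<le> x"
  thus "0 \<le> L e x" unfolding glat_def using c0 a0 b0 by auto
qed

lemma poly_ok: "poly_latencies d EE L"
  unfolding poly_latencies_def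
proof
  fix e assume "e \<in> EE"
  show "\<exists>\<alpha>::nat\<Rightarrow>real. (\<forall>j. 0 \<le> \<alpha> j) \<and> (\<forall>x\<ge>0. L e x = (\<Sum>j\<le>d. \<alpha> j * x ^ j))"
  proof (cases "e < 12")
    case True
    have "\<forall>x\<ge>0. L e x = (\<Sum>j\<le>d. (if j = 0 then c else 0) * x ^ j)"
    proof (intro allI impI)
      fix x :: real
      have "(\<Sum>j\<le>d. (if j = 0 then c else 0) * x ^ j) = (\<Sum>j\<le>d. if j = 0 then c else 0)"
        by (rule sum.cong) auto
      also have "\<dots> = c" by (simp add: sum.delta)
      finally show "L e x = (\<Sum>j\<le>d. (if j = 0 then c else 0) * x ^ j)" using True unfolding glat_def by simp
    qed
    thus ?thesis using c0 by (intro exI[of _ "\<lambda>j. if j = 0 then c else 0"]) auto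
  next
    case False
    define co where "co = (if e < 156 then a else b)"
    have co0: "0 \<le> co" using a0 b0 co_def by simp
    have "\<forall>x\<ge>0. L e x = (\<Sum>j\<le>d. (if j = d then co else 0) * x ^ j)"
    proof (intro allI impI)
      fix x :: real
      have "(\<Sum>j\<le>d. (if j = d then co else 0) * x ^ j) = (\<Sum>j\<le>d. if j = d then co * x ^ d else 0)"
        by (rule sum.cong) auto
      also have "\<dots> = co * x ^ d" by (simp add: sum.delta)
      finally show "L e x = (\<Sum>j\<le>d. (if j = d then co else 0) * x ^ j)" using False unfolding glat_def co_def by simp
    qed
    thus ?thesis using co0 by (intro exI[of _ "\<lambda>j. if j = d then co else 0"]) auto
  qed
qed

lemma main:
  assumes "R \<le> Pf d a b 0 / Qf d c a b 11"
  shows "\<exists>n w E Sig lat. congestion_game n w E Sig lat \<and> unweighted n w \<and>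
            poly_latencies d E lat \<and> (\<exists>S. is_PNE n w Sig lat S) \<and> PoS n w Sig lat \<ge> R"
  apply (rule exI[of _ 12], rule exI[of _ w1], rule exI[of _ EE], rule exI[of _ Gs], rule exI[of _ L])
  using game_ok poly_ok PNE_exists PoS_bound assms by (auto simp: unweighted_def)

end


lemma le11: "(k::nat) \<le> 11 \<Longrightarrow> k = 0 \<or> k = 1 \<or> k = 2 \<or> k = 3 \<or> k = 4 \<or> k = 5 \<or> k = 6 \<or> k = 7 \<or> k = 8 \<or> k = 9 \<or> k = 10 \<or> k = 11"
  by presburger

lemma dom2: "k \<le> 11 \<Longrightarrow> 0 < Pf 2 260 3 k \<and> Pf 2 260 3 k < Qf 2 15016 260 3 k"
  apply (drule le11)
  apply (unfold Pf_def Qf_def)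
  apply (elim disjE)
  apply (hypsubst, code_simp)+
  done

lemma dom3: "k \<le> 11 \<Longrightarrow> 0 < Pf 3 5125 14 k \<and> Pf 3 5125 14 k < Qf 3 521676 5125 14 k"
  apply (drule le11)
  apply (unfold Pf_def Qf_def)
  apply (elim disjE)
  apply (hypsubst, code_simp)+
  done

lemma ratio2: "2.1859 \<le> Pf 2 260 3 0 / Qf 2 15016 260 3 11"
  unfolding Pf_def Qf_def by code_simp
lemma ratio3: "2.7558 \<le> Pf 3 5125 14 0 / Qf 3 521676 5125 14 11"
  unfolding Pf_def Qf_def by code_simp

theorem mainTheorem13:
  fixes \<delta> :: real
  assumes "\<delta> > 0"
  shows "(\<exists>n w E Sig lat. congestion_game n w E Sig lat \<and> unweighted n w \<and>
            poly_latencies 2 E lat \<and> (\<exists>S. is_PNE n w Sig lat S) \<and>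
            PoS n w Sig lat \<ge> 2.1859 - \<delta>) \<and>
         (\<exists>n w E Sig lat. congestion_game n w E Sig lat \<and> unweighted n w \<and>
            poly_latencies 3 E lat \<and> (\<exists>S. is_PNE n w Sig lat S) \<and>
            PoS n w Sig lat \<ge> 2.7558 - \<delta>)"
proof -
  interpret g2: good_params 2 15016 260 3 by standard (simp_all add: dom2)
  interpret g3: good_params 3 521676 5125 14 by standard (simp_all add: dom3)
  have r2: "2.1859 - \<delta> \<le> Pf 2 260 3 0 / Qf 2 15016 260 3 11" using ratio2 assms by linarith
  have r3: "2.7558 - \<delta> \<le> Pf 3 5125 14 0 / Qf 3 521676 5125 14 11" using ratio3 assms by linarith
  show ?thesis using g2.main[OF r2] g3.main[OF r3] by blast
qed

end
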